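(* Let $X$ be a real normed linear space, let $\Omega_1,\Omega_2\subset X$ be convex, and let $\bar x\in\Omega_1\cap\Omega_2$. Suppose there exists a bounded convex neighborhood $V$ of $\bar x$ such that $$0\in\operatorname{int}\big(\Omega_1-(\Omega_2\cap V)\big).$$ Then $$N(\bar x;\Omega_1\cap\Omega_2)=N(\bar x;\Omega_1)+N(\bar x;\Omega_2).$$
   Context: For a convex set $\Omega\subset X$ and $\bar x\in\Omega$, the normal cone is $N(\bar x;\Omega)=\{x^*\in X^*\mid \langle x^*,x-\bar x\rangle\le0\ \forall x\in\Omega\}$, where $X^*$ is the topological dual of $X$. For sets $A,B$, $A-B=\{a-b\mid a\in A,b\in B\}$; $\operatorname{int}$ is the topological interior. *)

theory Defs
  imports "HOL-Analysis.Analysis"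
begin

text \<open>Topological dual of a real normed space: continuous (= bounded) linear functionals,
  represented as functions into real satisfying bounded_linear.\<close>

definition normal_cone :: "'a::real_normed_vector \<Rightarrow> 'a set \<Rightarrow> ('a \<Rightarrow> real) set" where
  "normal_cone xbar \<Omega> =
     {xs. bounded_linear xs \<and> (\<forall>x\<in>\<Omega>. xs (x - xbar) \<le> 0)}"

end

theory Submission
  imports Defs
begin

lemma hahn_banach_sublinear:
  fixes p :: "'a::real_vector \<Rightarrow> real"
  assumes sub: "\<And>x y. p (x + y) \<le> p x + p y"
    and hom: "\<And>t x. t > 0 \<Longrightarrow> p (t *\<^sub>R x) = t * p x"
  shows "\<exists>L. linear L \<and> (\<forall>x. L x \<le> p x)"
proof -
  have p0: "p 0 = 0" using hom[of 2 0] by simp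
  define F where "F = {G :: ('a \<times> real) set. (0,0) \<in> G \<and>
      (\<forall>x y u v. (x,y) \<in> G \<longrightarrow> (u,v) \<in> G \<longrightarrow> (x+u, y+v) \<in> G) \<and>
      (\<forall>c x y. (x,y) \<in> G \<longrightarrow> (c *\<^sub>R x, c * y) \<in> G) \<and>
      (\<forall>x y1 y2. (x,y1) \<in> G \<longrightarrow> (x,y2) \<in> G \<longrightarrow> y1 = y2) \<and>
      (\<forall>x y. (x,y) \<in> G \<longrightarrow> y \<le> p x)}"
  have "\<exists>M\<in>F. \<forall>X\<in>F. M \<subseteq> X \<longrightarrow> X = M"
  proof (rule Zorn_Lemma2, intro ballI)
    fix C assume C: "C \<in> chains F"
    show "\<exists>U\<in>F. \<forall>X\<in>C. X \<subseteq> U"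
    proof (cases "C = {}")
      case True
      have "{(0,0)} \<in> F" using p0 by (auto simp: F_def)
      then show ?thesis using True by blast
    next
      case False
      have CF: "C \<subseteq> F" and ch: "\<And>A B. A \<in> C \<Longrightarrow> B \<in> C \<Longrightarrow> A \<subseteq> B \<or> B \<subseteq> A"
        using C by (auto simp: chains_def chain_subset_def)
      have two: "\<exists>G\<in>C. a \<in> G \<and> b \<in> G" if "a \<in> \<Union>C" "b \<in> \<Union>C" for a b
        using that ch by blast
      have "\<Union>C \<in> F"
        unfolding F_def
      proof (intro CollectI conjI allI impI)
        show "(0,0) \<in> \<Union>C" using False CF by (auto simp: F_def)
      next
        fix x y u v assume "(x,y) \<in> \<Union>C" "(u,v) \<in> \<Union>C"
        then obtain G where "G \<in> C" "(x,y) \<in> G" "(u,v) \<in> G" using two by blast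
        moreover have "G \<in> F" using \<open>G \<in> C\<close> CF by blast
        ultimately have "(x+u, y+v) \<in> G" unfolding F_def by blast
        then show "(x+u, y+v) \<in> \<Union>C" using \<open>G \<in> C\<close> by blast
      next
        fix c x y assume "(x,y) \<in> \<Union>C"
        then obtain G where "G \<in> C" "(x,y) \<in> G" by blast
        moreover have "G \<in> F" using \<open>G \<in> C\<close> CF by blast
        ultimately have "(c *\<^sub>R x, c*y) \<in> G" unfolding F_def by blast
        then show "(c *\<^sub>R x, c*y) \<in> \<Union>C" using \<open>G \<in> C\<close> by blast
      next
        fix x y1 y2 assume "(x,y1) \<in> \<Union>C" "(x,y2) \<in> \<Union>C"
        then obtain G where "G \<in> C" "(x,y1) \<in> G" "(x,y2) \<in> G" using two by blast
        moreover have "G \<in> F" using \<open>G \<in> C\<close> CF by blast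
        ultimately show "y1 = y2" unfolding F_def by blast
      next
        fix x y assume "(x,y) \<in> \<Union>C"
        then obtain G where "G \<in> C" "(x,y) \<in> G" by blast
        moreover have "G \<in> F" using \<open>G \<in> C\<close> CF by blast
        ultimately show "y \<le> p x" unfolding F_def by blast
      qed
      then show ?thesis by blast
    qed
  qed
  then obtain M where MF: "M \<in> F" and Mmax: "\<And>X. X \<in> F \<Longrightarrow> M \<subseteq> X \<Longrightarrow> X = M" by blast
  have M0: "(0,0) \<in> M" and Madd: "\<And>x y u v. (x,y) \<in> M \<Longrightarrow> (u,v) \<in> M \<Longrightarrow> (x+u, y+v) \<in> M"
    and Mscale: "\<And>c x y. (x,y) \<in> M \<Longrightarrow> (c *\<^sub>R x, c * y) \<in> M"
    and Mfun: "\<And>x y1 y2. (x,y1) \<in> M \<Longrightarrow> (x,y2) \<in> M \<Longrightarrow> y1 = y2"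
    and Mdom: "\<And>x y. (x,y) \<in> M \<Longrightarrow> y \<le> p x"
    using MF unfolding F_def by blast+
  have total: "\<exists>y. (x,y) \<in> M" for x
  proof (rule ccontr)
    assume nx: "\<not> (\<exists>y. (x,y) \<in> M)"
    define S where "S = {yu - p (u - x) | u yu. (u,yu) \<in> M}"
    define c where "c = Sup S"
    have Sne: "S \<noteq> {}" using M0 unfolding S_def by blast
    have Sle: "yu - p (u - x) \<le> p (v + x) - yv" if "(u,yu) \<in> M" "(v,yv) \<in> M" for u yu v yv
    proof -
      have "yu + yv \<le> p (u + v)" using Mdom[OF Madd[OF that]] .
      also have "\<dots> = p ((u - x) + (v + x))" by (simp add: algebra_simps)
      also have "\<dots> \<le> p (u - x) + p (v + x)" by (rule sub)
      finally show ?thesis by simp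
    qed
    have Sbdd: "bdd_above S" unfolding S_def bdd_above_def
      using Sle[OF _ M0] by auto
    have c_up: "yu - p (u - x) \<le> c" if "(u,yu) \<in> M" for u yu
      unfolding c_def using that Sbdd by (auto intro!: cSup_upper simp: S_def)
    have c_low: "c \<le> p (v + x) - yv" if "(v,yv) \<in> M" for v yv
      unfolding c_def using Sne Sle[OF _ that] by (auto intro!: cSup_least simp: S_def)
    define M' where "M' = {(u + t *\<^sub>R x, yu + t * c) | u yu t. (u,yu) \<in> M}"
    have "M \<subseteq> M'"
    proof
      fix z assume "z \<in> M"
      obtain a b where z: "z = (a,b)" by fastforce
      have "(a,b) = (a + 0 *\<^sub>R x, b + 0 * c)" by simp
      then show "z \<in> M'" unfolding M'_def using \<open>z \<in> M\<close> z by blast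
    qed
    moreover have "(x, c) \<in> M'"
    proof -
      have "(x, c) = (0 + 1 *\<^sub>R x, 0 + 1 * c)" by simp
      then show ?thesis unfolding M'_def using M0 by blast
    qed
    moreover have "M' \<in> F"
      unfolding F_def
    proof (intro CollectI conjI allI impI)
      have "((0::'a),(0::real)) = (0 + 0 *\<^sub>R x, 0 + 0 * c)" by simp
      then show "(0,0) \<in> M'" unfolding M'_def using M0 by blast
    next
      fix a b u v assume "(a,b) \<in> M'" "(u,v) \<in> M'"
      then obtain a1 b1 t1 u1 v1 t2 where "(a1,b1) \<in> M" "(u1,v1) \<in> M"
        "a = a1 + t1 *\<^sub>R x" "b = b1 + t1 * c" "u = u1 + t2 *\<^sub>R x" "v = v1 + t2 * c"
        unfolding M'_def by blast
      then have "(a+u, b+v) = ((a1+u1) + (t1+t2) *\<^sub>R x, (b1+v1) + (t1+t2)*c)"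
        by (simp add: algebra_simps)
      moreover have "(a1+u1, b1+v1) \<in> M" using Madd \<open>(a1,b1) \<in> M\<close> \<open>(u1,v1) \<in> M\<close> by blast
      ultimately show "(a+u, b+v) \<in> M'" unfolding M'_def by blast
    next
      fix k a b assume "(a,b) \<in> M'"
      then obtain a1 b1 t1 where "(a1,b1) \<in> M"
        "a = a1 + t1 *\<^sub>R x" "b = b1 + t1 * c"
        unfolding M'_def by blast
      then have "(k *\<^sub>R a, k*b) = (k *\<^sub>R a1 + (k*t1) *\<^sub>R x, k*b1 + (k*t1)*c)"
        by (simp add: algebra_simps)
      moreover have "(k *\<^sub>R a1, k*b1) \<in> M" using Mscale \<open>(a1,b1) \<in> M\<close> by blast
      ultimately show "(k *\<^sub>R a, k*b) \<in> M'" unfolding M'_def by blast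
    next
      fix a b1 b2 assume "(a,b1) \<in> M'" "(a,b2) \<in> M'"
      then obtain u1 y1 t1 u2 y2 t2 where m: "(u1,y1) \<in> M" "(u2,y2) \<in> M"
        and e: "a = u1 + t1 *\<^sub>R x" "b1 = y1 + t1 * c" "a = u2 + t2 *\<^sub>R x" "b2 = y2 + t2 * c"
        unfolding M'_def by blast
      have "t1 = t2"
      proof (rule ccontr)
        assume ne: "t1 \<noteq> t2"
        have "(u2 + (-1) *\<^sub>R u1, y2 + (-1) * y1) \<in> M" using m by (intro Madd Mscale)
        then have "(u2 - u1, y2 - y1) \<in> M" by simp
        then have "((1/(t1-t2)) *\<^sub>R (u2 - u1), (1/(t1-t2)) * (y2 - y1)) \<in> M"
          by (rule Mscale)
        moreover have "(1/(t1-t2)) *\<^sub>R (u2 - u1) = x"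
        proof -
          have "u2 - u1 = (t1 - t2) *\<^sub>R x" using e by (simp add: algebra_simps)
          then show ?thesis using ne by simp
        qed
        ultimately show False using nx by auto
      qed
      then have "u1 = u2" using e by simp
      then have "y1 = y2" using Mfun m by blast
      then show "b1 = b2" using e \<open>t1 = t2\<close> by simp
    next
      fix a b assume "(a,b) \<in> M'"
      then obtain u y t where m: "(u,y) \<in> M" and e: "a = u + t *\<^sub>R x" "b = y + t * c"
        unfolding M'_def by blast
      consider "t = 0" | "t > 0" | "t < 0" by linarith
      then show "b \<le> p a"
      proof cases
        case 1 then show ?thesis using e Mdom[OF m] by simp
      next
        case 2
        have m': "((1/t) *\<^sub>R u, (1/t) * y) \<in> M" using Mscale[OF m] .
        have "c \<le> p ((1/t) *\<^sub>R u + x) - (1/t) * y" by (rule c_low[OF m'])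
        then have "t * c \<le> t * (p ((1/t) *\<^sub>R u + x) - (1/t) * y)" using 2
          by (simp add: mult_left_mono)
        also have "\<dots> = t * p ((1/t) *\<^sub>R u + x) - y" using 2 by (simp add: algebra_simps)
        also have "t * p ((1/t) *\<^sub>R u + x) = p (t *\<^sub>R ((1/t) *\<^sub>R u + x))" using hom[OF 2] by simp
        also have "t *\<^sub>R ((1/t) *\<^sub>R u + x) = a" using e 2 by (simp add: algebra_simps)
        finally show ?thesis using e by simp
      next
        case 3
        define s where "s = - t"
        have s: "s > 0" using 3 s_def by simp
        have m': "((1/s) *\<^sub>R u, (1/s) * y) \<in> M" using Mscale[OF m] .
        have "(1/s) * y - p ((1/s) *\<^sub>R u - x) \<le> c" by (rule c_up[OF m'])
        then have "s * ((1/s) * y - p ((1/s) *\<^sub>R u - x)) \<le> s * c" using s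
          by (simp add: mult_left_mono)
        then have "y - s * p ((1/s) *\<^sub>R u - x) \<le> s * c" using s by (simp add: algebra_simps)
        also have "s * p ((1/s) *\<^sub>R u - x) = p (s *\<^sub>R ((1/s) *\<^sub>R u - x))" using hom[OF s] by simp
        also have "s *\<^sub>R ((1/s) *\<^sub>R u - x) = a" using e s s_def by (simp add: algebra_simps)
        finally show ?thesis using e s_def by simp
      qed
    qed
    ultimately have "M' = M" using Mmax by blast
    then show False using \<open>(x,c) \<in> M'\<close> nx by blast
  qed
  define L where "L x = (THE y. (x,y) \<in> M)" for x
  have LM: "(x, L x) \<in> M" for x
    unfolding L_def using total[of x] Mfun by (metis theI)
  have Leq: "(x,y) \<in> M \<Longrightarrow> L x = y" for x y using LM Mfun by blast
  have "linear L"
  proof (rule linearI)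
    fix a b show "L (a + b) = L a + L b" using Madd[OF LM LM] Leq by blast
  next
    fix r a show "L (r *\<^sub>R a) = r *\<^sub>R L a" using Mscale[OF LM] Leq by simp
  qed
  moreover have "\<forall>x. L x \<le> p x" using LM Mdom by blast
  ultimately show ?thesis by blast
qed


theorem theorem3p1:
  fixes \<Omega>1 \<Omega>2 V :: "'a::real_normed_vector set" and xbar :: 'a
  assumes "convex \<Omega>1" and "convex \<Omega>2"
    and "xbar \<in> \<Omega>1 \<inter> \<Omega>2"
    and "bounded V" and "convex V" and "xbar \<in> interior V"
    and "0 \<in> interior {a - b | a b. a \<in> \<Omega>1 \<and> b \<in> \<Omega>2 \<inter> V}"
  shows "normal_cone xbar (\<Omega>1 \<inter> \<Omega>2) =
           {(\<lambda>x. f x + g x) | f g. f \<in> normal_cone xbar \<Omega>1 \<and> g \<in> normal_cone xbar \<Omega>2}"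
proof
  show "{(\<lambda>x. f x + g x) | f g. f \<in> normal_cone xbar \<Omega>1 \<and> g \<in> normal_cone xbar \<Omega>2}
        \<subseteq> normal_cone xbar (\<Omega>1 \<inter> \<Omega>2)"
  proof
    fix h assume "h \<in> {(\<lambda>x. f x + g x) | f g. f \<in> normal_cone xbar \<Omega>1 \<and> g \<in> normal_cone xbar \<Omega>2}"
    then obtain f g where h: "h = (\<lambda>x. f x + g x)" and f: "f \<in> normal_cone xbar \<Omega>1"
      and g: "g \<in> normal_cone xbar \<Omega>2" by blast
    have "bounded_linear h" using f g h by (simp add: normal_cone_def bounded_linear_add)
    moreover have "\<forall>x\<in>\<Omega>1 \<inter> \<Omega>2. h (x - xbar) \<le> 0"
      using f g h by (force simp: normal_cone_def intro: add_nonpos_nonpos)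
    ultimately show "h \<in> normal_cone xbar (\<Omega>1 \<inter> \<Omega>2)" by (simp add: normal_cone_def)
  qed
next
  show "normal_cone xbar (\<Omega>1 \<inter> \<Omega>2) \<subseteq>
        {(\<lambda>x. f x + g x) | f g. f \<in> normal_cone xbar \<Omega>1 \<and> g \<in> normal_cone xbar \<Omega>2}"
  proof
    fix xs assume xsN: "xs \<in> normal_cone xbar (\<Omega>1 \<inter> \<Omega>2)"
    have blxs: "bounded_linear xs" and xsle: "\<And>x. x \<in> \<Omega>1 \<inter> \<Omega>2 \<Longrightarrow> xs (x - xbar) \<le> 0"
      using xsN by (auto simp: normal_cone_def)
    have lxs: "linear xs" using blxs bounded_linear.linear by blast
    obtain K where K: "K > 0" "\<And>x. norm (xs x) \<le> norm x * K"
      using bounded_linear.pos_bounded[OF blxs] by blast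
    obtain r where r: "r > 0" and rball: "ball 0 r \<subseteq> {a - b | a b. a \<in> \<Omega>1 \<and> b \<in> \<Omega>2 \<inter> V}"
      using assms(7) mem_interior by blast
    obtain Mv where Mv: "\<And>b. b \<in> V \<Longrightarrow> dist xbar b \<le> Mv"
      using assms(4) bounded_any_center by blast
    have x1: "xbar \<in> \<Omega>1" and x2: "xbar \<in> \<Omega>2" using assms(3) by auto
    define R where "R z = {t * xs (a - xbar) | t a b. t \<ge> 0 \<and> a \<in> \<Omega>1 \<and> b \<in> \<Omega>2 \<and> z = t *\<^sub>R (a - b)}" for z
    define s where "s z = Sup (R z)" for z
    have Rball: "\<exists>a b. a \<in> \<Omega>1 \<and> b \<in> \<Omega>2 \<and> b \<in> V \<and> w = a - b" if "norm w < r" for w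
    proof -
      have "w \<in> ball 0 r" using that by simp
      then show ?thesis using rball by blast
    qed
    have Rne: "\<exists>v. v \<in> R z" for z
    proof -
      define k where "k = 2 * (norm z + 1) / r"
      have "norm z + 1 > 0" by (smt (verit) norm_ge_zero)
      then have k: "k > 0" using r unfolding k_def by (intro divide_pos_pos) auto
      define w where "w = (1/k) *\<^sub>R z"
      have "norm w = norm z / k" using k by (simp add: w_def)
      also have "\<dots> = r * norm z / (2 * (norm z + 1))" using r by (simp add: k_def)
      also have "\<dots> < r"
      proof -
        have "norm z / (2 * (norm z + 1)) < 1" proof (subst divide_less_eq_1_pos)
          show "0 < 2 * (norm z + 1)" using norm_ge_zero[of z] by (smt (verit))
          show "norm z < 2 * (norm z + 1)" using norm_ge_zero[of z] by (smt (verit))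
        qed
        then have "r * (norm z / (2 * (norm z + 1))) < r * 1" using r by (rule mult_strict_left_mono)
        then show ?thesis by simp
      qed
      finally obtain a b where ab: "a \<in> \<Omega>1" "b \<in> \<Omega>2" "w = a - b" using Rball by blast
      have "z = k *\<^sub>R ((1/k) *\<^sub>R z)" using k by simp
      then have "z = k *\<^sub>R (a - b)" using ab(3) by (simp only: w_def)
      then have "k * xs (a - xbar) \<in> R z" unfolding R_def using ab k
        by (intro CollectI exI[of _ k] exI[of _ a] exI[of _ b]) simp
      then show ?thesis by blast
    qed
    have R0: "v \<le> 0" if hv: "v \<in> R 0" for v
    proof -
      obtain t a b where tab: "v = t * xs (a - xbar)" "t \<ge> 0" "a \<in> \<Omega>1" "b \<in> \<Omega>2" "0 = t *\<^sub>R (a - b)"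
        using hv unfolding R_def by blast
      show ?thesis
      proof (cases "t = 0")
        case True then show ?thesis using tab by simp
      next
        case False
        then have "a = b" using tab by simp
        then have "xs (a - xbar) \<le> 0" using xsle tab by blast
        then show ?thesis using tab by (simp add: mult_nonneg_nonpos)
      qed
    qed
    have Radd: "v1 + v2 \<in> R (z1 + z2)" if hv: "v1 \<in> R z1" "v2 \<in> R z2" for v1 v2 z1 z2
    proof -
      obtain t1 a1 b1 where 1: "v1 = t1 * xs (a1 - xbar)" "t1 \<ge> 0" "a1 \<in> \<Omega>1" "b1 \<in> \<Omega>2" "z1 = t1 *\<^sub>R (a1 - b1)"
        using hv(1) unfolding R_def by blast
      obtain t2 a2 b2 where 2: "v2 = t2 * xs (a2 - xbar)" "t2 \<ge> 0" "a2 \<in> \<Omega>1" "b2 \<in> \<Omega>2" "z2 = t2 *\<^sub>R (a2 - b2)"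
        using hv(2) unfolding R_def by blast
      show ?thesis
      proof (cases "t1 + t2 = 0")
        case True
        then have "t1 = 0" "t2 = 0" using 1 2 by auto
        then have "v1 + v2 = 0 * xs (xbar - xbar) \<and> z1 + z2 = 0 *\<^sub>R (xbar - xbar)" using 1 2 by simp
        then show ?thesis unfolding R_def using x1 x2 by blast
      next
        case False
        define T where "T = t1 + t2"
        have T: "T > 0" using False 1 2 T_def by simp
        define a where "a = (t1/T) *\<^sub>R a1 + (t2/T) *\<^sub>R a2"
        define b where "b = (t1/T) *\<^sub>R b1 + (t2/T) *\<^sub>R b2"
        have sum1: "t1/T + t2/T = 1" using T by (simp add: T_def add_divide_distrib[symmetric])
        have a: "a \<in> \<Omega>1" unfolding a_def using assms(1) 1 2 T sum1
          by (simp add: convex_def)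
        have b: "b \<in> \<Omega>2" unfolding b_def using assms(2) 1 2 T sum1
          by (simp add: convex_def)
        have "T *\<^sub>R (a - b) = t1 *\<^sub>R (a1 - b1) + t2 *\<^sub>R (a2 - b2)"
          using T by (simp add: a_def b_def algebra_simps)
        then have z: "z1 + z2 = T *\<^sub>R (a - b)" using 1 2 by simp
        have "a - xbar = (t1/T) *\<^sub>R (a1 - xbar) + (t2/T) *\<^sub>R (a2 - xbar)"
          using sum1 by (simp add: a_def algebra_simps scaleR_add_left[symmetric])
        then have "xs (a - xbar) = (t1/T) * xs (a1 - xbar) + (t2/T) * xs (a2 - xbar)"
          using lxs by (simp add: linear_add linear_scale)
        then have "T * xs (a - xbar) = v1 + v2" using T 1 2 by (simp add: algebra_simps)
        then show ?thesis unfolding R_def using z a b T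
          by (intro CollectI exI[of _ T] exI[of _ a] exI[of _ b]) simp
      qed
    qed
    have Rscale: "k * v \<in> R (k *\<^sub>R z)" if hv: "v \<in> R z" "k > 0" for v z k
    proof -
      obtain t a b where 1: "v = t * xs (a - xbar)" "t \<ge> 0" "a \<in> \<Omega>1" "b \<in> \<Omega>2" "z = t *\<^sub>R (a - b)"
        using hv(1) unfolding R_def by blast
      have "k * v = (k*t) * xs (a - xbar)" "k *\<^sub>R z = (k*t) *\<^sub>R (a - b)" "k * t \<ge> 0"
        using 1 hv(2) by auto
      then show ?thesis unfolding R_def using 1 by blast
    qed
    have bdd: "bdd_above (R z)" for z
    proof -
      obtain w where w: "w \<in> R (-z)" using Rne by blast
      have "v \<le> - w" if hv: "v \<in> R z" for v
      proof -
        have "v + w \<in> R 0" using Radd[OF hv w] by simp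
        then have "v + w \<le> 0" by (rule R0)
        then show ?thesis by simp
      qed
      then show ?thesis unfolding bdd_above_def by blast
    qed
    have s_ge: "v \<le> s z" if "v \<in> R z" for v z
      unfolding s_def using that bdd by (rule cSup_upper)
    have s_le: "s z \<le> c" if "\<And>v. v \<in> R z \<Longrightarrow> v \<le> c" for z c
    proof -
      have "R z \<noteq> {}" using Rne[of z] by blast
      then show ?thesis unfolding s_def using that by (rule cSup_least)
    qed
    have s_super: "s z1 + s z2 \<le> s (z1 + z2)" for z1 z2
    proof -
      have "v2 \<le> s (z1 + z2) - s z1" if v2: "v2 \<in> R z2" for v2
      proof -
        have "v1 \<le> s (z1 + z2) - v2" if "v1 \<in> R z1" for v1
          using s_ge[OF Radd[OF that v2]] by simp
        then have "s z1 \<le> s (z1 + z2) - v2" by (rule s_le)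
        then show ?thesis by simp
      qed
      then have "s z2 \<le> s (z1 + z2) - s z1" by (rule s_le)
      then show ?thesis by simp
    qed
    have s_hom1: "k * s z \<le> s (k *\<^sub>R z)" if "k > 0" for k z
    proof -
      have "v \<le> s (k *\<^sub>R z) / k" if "v \<in> R z" for v
        using s_ge[OF Rscale[OF that \<open>k > 0\<close>]] \<open>k > 0\<close> by (simp add: le_divide_eq mult.commute)
      then have "s z \<le> s (k *\<^sub>R z) / k" by (rule s_le)
      then show ?thesis using that by (simp add: le_divide_eq mult.commute)
    qed
    have s_hom: "s (k *\<^sub>R z) = k * s z" if "k > 0" for k z
    proof -
      have "(1/k) * s (k *\<^sub>R z) \<le> s ((1/k) *\<^sub>R (k *\<^sub>R z))" using that by (intro s_hom1) simp
      also have "(1/k) *\<^sub>R (k *\<^sub>R z) = z" using that by simp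
      finally have "s (k *\<^sub>R z) \<le> k * s z" using that by (simp add: divide_le_eq mult.commute)
      then show ?thesis using s_hom1[OF that, of z] by simp
    qed
    obtain L where L: "linear L" "\<And>x. L x \<le> - s x"
    proof -
      have "\<exists>L. linear L \<and> (\<forall>x. L x \<le> (\<lambda>z. - s z) x)"
      proof (rule hahn_banach_sublinear)
        fix x y show "- s (x + y) \<le> - s x + - s y" using s_super[of x y] by simp
      next
        fix t :: real and x assume "t > 0" then show "- s (t *\<^sub>R x) = t * - s x" using s_hom by simp
      qed
      then show ?thesis using that by auto
    qed
    define g where "g x = - L x" for x
    have g_ge: "s x \<le> g x" for x using L(2)[of x] by (simp add: g_def)
    have g_add: "g (x + y) = g x + g y" for x y using linear_add[OF L(1)] by (simp add: g_def)
    have g_scale: "g (c *\<^sub>R x) = c * g x" for c x using linear_scale[OF L(1)] by (simp add: g_def)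
    have g_neg: "g (- x) = - g x" for x using g_scale[of "-1" x] by simp
    define C where "C = K * (r + Mv)"
    have g_low: "- C \<le> g w" if hw: "norm w < r" for w
    proof -
      obtain a b where ab: "a \<in> \<Omega>1" "b \<in> \<Omega>2" "b \<in> V" "w = a - b" using Rball[OF hw] by blast
      have "1 * xs (a - xbar) \<in> R w" unfolding R_def using ab
        by (intro CollectI exI[of _ "1::real"] exI[of _ a] exI[of _ b]) simp
      then have "xs (a - xbar) \<le> g w" using s_ge g_ge by (metis mult_1 order_trans)
      moreover have "a - xbar = w + (b - xbar)" using ab by simp
      moreover have "norm (xs (w + (b - xbar))) \<le> (norm w + norm (b - xbar)) * K"
        using K(2)[of "w + (b - xbar)"] norm_triangle_ineq[of w "b - xbar"] K(1)
        by (meson mult_right_mono less_imp_le order_trans)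
      moreover have "norm (b - xbar) \<le> Mv" using Mv[OF ab(3)] by (simp add: dist_norm norm_minus_commute)
      moreover have "(norm w + norm (b - xbar)) * K \<le> (r + Mv) * K"
        using that \<open>norm (b - xbar) \<le> Mv\<close> K(1) by (intro mult_right_mono) auto
      ultimately show ?thesis unfolding C_def
        by (smt (verit) abs_le_D1 mult.commute norm_minus_cancel real_norm_def)
    qed
    have g_abs: "\<bar>g w\<bar> \<le> C" if "norm w < r" for w
      using g_low[OF that] g_low[of "- w"] that g_neg[of w] by simp
    have blg: "bounded_linear g"
    proof (rule bounded_linear_intro[where K = "2 * C / r"])
      fix x y show "g (x + y) = g x + g y" by (rule g_add)
    next
      fix c x show "g (c *\<^sub>R x) = c *\<^sub>R g x" using g_scale by simp
    next
      fix x
      show "norm (g x) \<le> norm x * (2 * C / r)"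
      proof (cases "x = 0")
        case True then show ?thesis using g_scale[of 0 0] by simp
      next
        case False
        define w where "w = (r / (2 * norm x)) *\<^sub>R x"
        have nw: "norm w = r / 2" using False r by (simp add: w_def)
        then have "norm w < r" using r by simp
        have "x = (2 * norm x / r) *\<^sub>R w" using False r by (simp add: w_def)
        then have "g x = (2 * norm x / r) * g w" using g_scale by metis
        then have "\<bar>g x\<bar> = (2 * norm x / r) * \<bar>g w\<bar>" using r by (simp add: abs_mult)
        also have "\<dots> \<le> (2 * norm x / r) * C" using g_abs[OF \<open>norm w < r\<close>] r
          by (intro mult_left_mono) auto
        also have "\<dots> = norm x * (2 * C / r)" by simp
        finally show ?thesis by simp
      qed
    qed
    define f where "f x = xs x - g x" for x
    have blf: "bounded_linear f" unfolding f_def using blxs blg by (rule bounded_linear_sub)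
    have fN: "f \<in> normal_cone xbar \<Omega>1"
    proof -
      have "f (a - xbar) \<le> 0" if "a \<in> \<Omega>1" for a
      proof -
        have "1 * xs (a - xbar) \<in> R (a - xbar)" unfolding R_def using that x2
          by (intro CollectI exI[of _ "1::real"] exI[of _ a] exI[of _ xbar]) simp
        then have "xs (a - xbar) \<le> g (a - xbar)" using s_ge g_ge by (metis mult_1 order_trans)
        then show ?thesis by (simp add: f_def)
      qed
      then show ?thesis using blf by (simp add: normal_cone_def)
    qed
    have gN: "g \<in> normal_cone xbar \<Omega>2"
    proof -
      have "g (b - xbar) \<le> 0" if "b \<in> \<Omega>2" for b
      proof -
        have "1 * xs (xbar - xbar) \<in> R (xbar - b)" unfolding R_def using that x1
          by (intro CollectI exI[of _ "1::real"] exI[of _ xbar] exI[of _ b]) simp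
        then have "xs (xbar - xbar) \<le> g (xbar - b)" using s_ge g_ge by (metis mult_1 order_trans)
        moreover have "xs (xbar - xbar) = 0" using lxs by (simp add: linear_0)
        moreover have "g (xbar - b) = - g (b - xbar)" using g_neg[of "b - xbar"] by simp
        ultimately show ?thesis by simp
      qed
      then show ?thesis using blg by (simp add: normal_cone_def)
    qed
    have "xs = (\<lambda>x. f x + g x)" by (simp add: f_def)
    then show "xs \<in> {(\<lambda>x. f x + g x) | f g. f \<in> normal_cone xbar \<Omega>1 \<and> g \<in> normal_cone xbar \<Omega>2}"
      using fN gN by blast
  qed
qed

end
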